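(* Let $(S,\Delta,\mathbb{P})$ be a probability space, $(U,d)$ a separable metric space, $\mathfrak{X}$ the set of $U$-valued random variables on $S$, $\mathcal{I}$ an ideal on $\mathbb{N}$ with $\mathbb{N}\notin\mathcal{I}$, $r\geq 0$, and $\{X_n\}_{n\in\mathbb{N}}$ a sequence in $\mathfrak{X}$. Then the set $\mathcal{I}^{\mathbb{P}}\text{-}LIM^rX_i$ is bounded in $(\mathfrak{X}^0,\rho)$ and its $\rho$-diameter is at most $\min\{1,2r\}$. Moreover, this bound cannot be reduced in general: for every $r$ with $0<2r<1$ there exist a probability space and a sequence of real-valued random variables (with $U=\mathbb{R}$ and the usual metric) such that, for the ideal $\mathcal{I}_{1/n}=\{A\subseteq\mathbb{N}:\sum_{n\in A}\frac1n<\infty\}$, the set $\mathcal{I}_{1/n}^{\mathbb{P}}\text{-}LIM^rX_i$ has $\rho$-diameter exactly $2r$.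
   Context: The Ky Fan metric is $\rho(X,Y)=\inf\{\varepsilon>0:\mathbb{P}(d(X,Y)>\varepsilon)\leq\varepsilon\}$; $\mathfrak{X}^0$ is the set of equivalence classes of $\mathfrak{X}$ under almost sure equality, on which $\rho$ is a metric. An ideal on $\mathbb{N}$ is a family $\mathcal{I}\subseteq\mathcal{P}(\mathbb{N})$ with $\varnothing\in\mathcal{I}$, closed under finite unions and under subsets. A sequence $\{X_n\}$ in $\mathfrak{X}$ is rough $\mathcal{I}$-convergent in probability to $X_*\in\mathfrak{X}$ with degree of roughness $r$ if $\{n\in\mathbb{N}:\mathbb{P}(d(X_n,X_* )>r+\varepsilon)>\delta\}\in\mathcal{I}$ for every $\varepsilon,\delta>0$; $\mathcal{I}^{\mathbb{P}}\text{-}LIM^rX_i$ denotes the set of all such $X_*$ (regarded as a subset of $\mathfrak{X}^0$). *)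

theory Defs
  imports "HOL-Probability.Probability"
begin

definition nat_ideal :: "nat set set \<Rightarrow> bool" where
  "nat_ideal I \<longleftrightarrow> {} \<in> I \<and> (\<forall>A\<in>I. \<forall>B\<in>I. A \<union> B \<in> I) \<and> (\<forall>A\<in>I. \<forall>B. B \<subseteq> A \<longrightarrow> B \<in> I)"

text \<open>Ky Fan metric on random variables (a pseudometric on representatives).\<close>
definition ky_fan :: "'s measure \<Rightarrow> ('s \<Rightarrow> 'a::metric_space) \<Rightarrow> ('s \<Rightarrow> 'a) \<Rightarrow> real" where
  "ky_fan M X Y = Inf {e. 0 < e \<and> measure M {s \<in> space M. e < dist (X s) (Y s)} \<le> e}"

definition rough_I_lim_prob ::
  "'s measure \<Rightarrow> nat set set \<Rightarrow> real \<Rightarrow> (nat \<Rightarrow> 's \<Rightarrow> 'a::metric_space) \<Rightarrow> ('s \<Rightarrow> 'a) set" where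
  "rough_I_lim_prob M I r X =
     {Z \<in> borel_measurable M. \<forall>\<epsilon>>0. \<forall>\<delta>>0.
        {n. \<delta> < measure M {s \<in> space M. r + \<epsilon> < dist (X n s) (Z s)}} \<in> I}"

definition ky_fan_diam :: "'s measure \<Rightarrow> ('s \<Rightarrow> 'a::metric_space) set \<Rightarrow> real" where
  "ky_fan_diam M L = (SUP p \<in> L \<times> L. ky_fan M (fst p) (snd p))"

definition I_harmonic :: "nat set set" where
  "I_harmonic = {A. summable (\<lambda>n. if n \<in> A then 1 / real n else 0)}"

end

theory Submission
  imports Defs
begin

lemma part1:
  fixes M :: "'s measure" and X :: "nat \<Rightarrow> 's \<Rightarrow> 'a::{metric_space, second_countable_topology}"
  assumes P: "prob_space M" and I: "nat_ideal I" and U: "UNIV \<notin> I" and r: "0 \<le> r"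
    and Xm: "\<forall>n. X n \<in> borel_measurable M"
    and Y: "Y \<in> rough_I_lim_prob M I r X" and Z: "Z \<in> rough_I_lim_prob M I r X"
  shows "ky_fan M Y Z \<le> min 1 (2*r)"
proof -
  interpret prob_space M by (rule P)
  define S where "S = {e. 0 < e \<and> measure M {s \<in> space M. e < dist (Y s) (Z s)} \<le> e}"
  have kf: "ky_fan M Y Z = Inf S" unfolding ky_fan_def S_def ..
  have bdd: "bdd_below S" unfolding S_def by (rule bdd_belowI[of _ 0]) auto
  have one: "1 \<in> S" unfolding S_def by auto
  have Ym: "Y \<in> borel_measurable M" and Zm: "Z \<in> borel_measurable M"
    using Y Z unfolding rough_I_lim_prob_def by auto
  have key: "e \<in> S" if e: "2*r < e" for e
  proof -
    define eps where "eps = (e - 2*r)/2"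
    define d where "d = e/2"
    have epos: "eps > 0" "d > 0" using e r by (auto simp: eps_def d_def)
    define A where "A = {n. d < measure M {s \<in> space M. r + eps < dist (X n s) (Y s)}}"
    define B where "B = {n. d < measure M {s \<in> space M. r + eps < dist (X n s) (Z s)}}"
    have "A \<in> I" using Y epos unfolding A_def rough_I_lim_prob_def by auto
    moreover have "B \<in> I" using Z epos unfolding B_def rough_I_lim_prob_def by auto
    ultimately have "A \<union> B \<in> I" using I unfolding nat_ideal_def by auto
    then have "A \<union> B \<noteq> UNIV" using U by metis
    then obtain n where n: "n \<notin> A" "n \<notin> B" by blast
    have Xn: "X n \<in> borel_measurable M" using Xm by auto
    define SA where "SA = {s \<in> space M. r + eps < dist (X n s) (Y s)}"
    define SB where "SB = {s \<in> space M. r + eps < dist (X n s) (Z s)}"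
    have mA: "SA \<in> sets M" unfolding SA_def using Xn Ym by measurable
    have mB: "SB \<in> sets M" unfolding SB_def using Xn Zm by measurable
    have sub: "{s \<in> space M. e < dist (Y s) (Z s)} \<subseteq> SA \<union> SB"
    proof
      fix s assume s: "s \<in> {s \<in> space M. e < dist (Y s) (Z s)}"
      have "dist (Y s) (Z s) \<le> dist (X n s) (Y s) + dist (X n s) (Z s)"
        by (metis dist_commute dist_triangle2)
      moreover have "e = 2*(r+eps)" unfolding eps_def by (simp add: field_simps)
      ultimately show "s \<in> SA \<union> SB" using s unfolding SA_def SB_def by auto
    qed
    have "measure M {s \<in> space M. e < dist (Y s) (Z s)} \<le> measure M (SA \<union> SB)"
      by (rule finite_measure_mono[OF sub]) (use mA mB in auto)
    also have "\<dots> \<le> measure M SA + measure M SB"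
      by (rule measure_subadditive[OF mA mB]) simp_all
    also have "\<dots> \<le> d + d" using n unfolding A_def B_def SA_def SB_def by auto
    also have "\<dots> = e" unfolding d_def by simp
    finally show ?thesis unfolding S_def using e r by auto
  qed
  have "Inf S \<le> 1" by (rule cInf_lower[OF one bdd])
  moreover have "Inf S \<le> 2*r"
    by (rule dense_ge) (rule cInf_lower[OF key bdd])
  ultimately show ?thesis unfolding kf by simp
qed

lemma harm_ideal: "nat_ideal I_harmonic"
  unfolding nat_ideal_def I_harmonic_def
proof (intro conjI ballI allI impI)
  show "{} \<in> {A. summable (\<lambda>n. if n \<in> A then 1 / real n else 0)}" by simp
next
  fix A B assume A: "A \<in> {A. summable (\<lambda>n. if n \<in> A then 1 / real n else 0)}"
    and B: "B \<in> {A. summable (\<lambda>n. if n \<in> A then 1 / real n else 0)}"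
  have "summable (\<lambda>n. (if n \<in> A then 1 / real n else 0) + (if n \<in> B then 1 / real n else 0))"
    using A B by (auto intro: summable_add)
  then show "A \<union> B \<in> {A. summable (\<lambda>n. if n \<in> A then 1 / real n else 0)}"
    unfolding mem_Collect_eq by (rule summable_comparison_test'[where N=0]) auto
next
  fix A B assume A: "A \<in> {A. summable (\<lambda>n. if n \<in> A then 1 / real n else 0)}"
    and BA: "B \<subseteq> A"
  from A show "B \<in> {A. summable (\<lambda>n. if n \<in> A then 1 / real n else 0)}"
    unfolding mem_Collect_eq by (rule summable_comparison_test'[where N=0]) (use BA in auto)
qed

lemma harm_proper: "UNIV \<notin> I_harmonic"
  unfolding I_harmonic_def using not_summable_harmonic
  by (simp add: inverse_eq_divide)

theorem theorem2p1:
  shows "(\<forall>(M :: 's measure) I (r::real) (X :: nat \<Rightarrow> 's \<Rightarrow> 'a::{metric_space, second_countable_topology}).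
            prob_space M \<and> nat_ideal I \<and> UNIV \<notin> I \<and> 0 \<le> r \<and> (\<forall>n. X n \<in> borel_measurable M)
            \<longrightarrow> (\<exists>B. \<forall>Y\<in>rough_I_lim_prob M I r X. \<forall>Z\<in>rough_I_lim_prob M I r X. ky_fan M Y Z \<le> B)
              \<and> (\<forall>Y\<in>rough_I_lim_prob M I r X. \<forall>Z\<in>rough_I_lim_prob M I r X.
                    ky_fan M Y Z \<le> min 1 (2 * r)))
       \<and> (\<forall>r::real. 0 < 2 * r \<and> 2 * r < 1 \<longrightarrow>
            (\<exists>(M :: real measure) (X :: nat \<Rightarrow> real \<Rightarrow> real).
               prob_space M \<and> (\<forall>n. X n \<in> borel_measurable M) \<and>
               ky_fan_diam M (rough_I_lim_prob M I_harmonic r X) = 2 * r))"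
proof (intro conjI allI impI)
  fix M :: "'s measure" and I and r :: real and X :: "nat \<Rightarrow> 's \<Rightarrow> 'a::{metric_space, second_countable_topology}"
  assume h: "prob_space M \<and> nat_ideal I \<and> UNIV \<notin> I \<and> 0 \<le> r \<and> (\<forall>n. X n \<in> borel_measurable M)"
  then show "\<forall>Y\<in>rough_I_lim_prob M I r X. \<forall>Z\<in>rough_I_lim_prob M I r X. ky_fan M Y Z \<le> min 1 (2 * r)"
    using part1 by blast
  then show "\<exists>B. \<forall>Y\<in>rough_I_lim_prob M I r X. \<forall>Z\<in>rough_I_lim_prob M I r X. ky_fan M Y Z \<le> B"
    by blast
next
  fix r :: real assume r: "0 < 2 * r \<and> 2 * r < 1"
  define M :: "real measure" where "M = return borel 0"
  define X :: "nat \<Rightarrow> real \<Rightarrow> real" where "X = (\<lambda>n s. 0)"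
  have P: "prob_space M" unfolding M_def by (rule prob_space_return) simp
  interpret prob_space M by (rule P)
  have Xm: "\<forall>n. X n \<in> borel_measurable M" unfolding X_def by simp
  define L where "L = rough_I_lim_prob M I_harmonic r X"
  have up: "\<forall>Y\<in>L. \<forall>Z\<in>L. ky_fan M Y Z \<le> min 1 (2 * r)"
    unfolding L_def using part1[OF P harm_ideal harm_proper _ Xm] r by auto
  have mem: "(\<lambda>s. c) \<in> L" if "\<bar>c\<bar> \<le> r" for c
  proof -
    have "{n. \<delta> < measure M {s \<in> space M. r + \<epsilon> < dist (X n s) c}} = {}"
      if "\<epsilon> > 0" "\<delta> > 0" for \<epsilon> \<delta> :: real
      using that \<open>\<bar>c\<bar> \<le> r\<close> by (auto simp: X_def dist_real_def)
    moreover have "{} \<in> I_harmonic" using harm_ideal unfolding nat_ideal_def by auto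
    ultimately show ?thesis unfolding L_def rough_I_lim_prob_def by auto
  qed
  have a: "(\<lambda>s. r) \<in> L" and b: "(\<lambda>s. -r) \<in> L" using mem r by auto
  have low: "2 * r \<le> ky_fan M (\<lambda>s. r) (\<lambda>s. -r)"
    unfolding ky_fan_def
  proof (rule cInf_greatest)
    show "{e. 0 < e \<and> measure M {s \<in> space M. e < dist r (- r)} \<le> e} \<noteq> {}"
    proof -
      have "1 \<in> {e. 0 < e \<and> measure M {s \<in> space M. e < dist r (- r)} \<le> e}"
        by (simp add: prob_le_1)
      then show ?thesis by blast
    qed
  next
    fix e assume "e \<in> {e. 0 < e \<and> measure M {s \<in> space M. e < dist r (- r)} \<le> e}"
    then have e: "0 < e" "measure M {s \<in> space M. e < dist r (- r)} \<le> e" by auto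
    show "2 * r \<le> e"
    proof (rule ccontr)
      assume "\<not> 2 * r \<le> e"
      then have "{s \<in> space M. e < dist r (- r)} = space M" using r by (auto simp: dist_real_def)
      then have "1 \<le> e" using e prob_space by simp
      then show False using r \<open>\<not> 2 * r \<le> e\<close> by simp
    qed
  qed
  have "ky_fan_diam M L = 2 * r"
    unfolding ky_fan_diam_def
  proof (rule antisym)
    show "(SUP p\<in>L \<times> L. ky_fan M (fst p) (snd p)) \<le> 2 * r"
      by (rule cSUP_least) (use a up in auto)
    have bdd: "bdd_above ((\<lambda>p. ky_fan M (fst p) (snd p)) ` (L \<times> L))"
      using up by (intro bdd_aboveI[of _ 1]) auto
    have ab: "((\<lambda>s. r), (\<lambda>s. -r)) \<in> L \<times> L" using a b by simp
    have "ky_fan M (\<lambda>s. r) (\<lambda>s. -r) \<le> (SUP p\<in>L \<times> L. ky_fan M (fst p) (snd p))"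
      using cSUP_upper[OF ab bdd] by simp
    then show "2 * r \<le> (SUP p\<in>L \<times> L. ky_fan M (fst p) (snd p))" using low by simp
  qed
  then show "\<exists>(M :: real measure) (X :: nat \<Rightarrow> real \<Rightarrow> real).
               prob_space M \<and> (\<forall>n. X n \<in> borel_measurable M) \<and>
               ky_fan_diam M (rough_I_lim_prob M I_harmonic r X) = 2 * r"
    using P Xm unfolding L_def by blast
qed

end
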